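(* Let $F_n$ be a probability distribution function on $\mathbb{R}$, $X\sim F_n$, with $\varepsilon_n:=F_n(0)>0$, $\mathbb{E}_{F_n}[X]\ge\mu>0$, $\mathbb{E}_{F_n}[X^2]\le C$ and $\mathbb{E}_{F_n}[X^2\mid X\le0]\le K$. Let $G_n(y)=\int_{-\infty}^{y}(x^2-yx)\,dF_n(x)$, let $y_n^*\ge0$ satisfy $G_n(y_n^* )=0$, let $D=C/\mu$, and let $$R_n=\mathbb{E}_{F_n}[X^2;\,X\le0]+y_n^*\,\mathbb{E}_{F_n}[|X|;\,X\le0].$$ Then $R_n\le(K+D\sqrt K)\,\varepsilon_n$.
   Context: $\mathbb{E}_{F_n}[Y;\,A]$ denotes $\mathbb{E}_{F_n}[Y\mathbf{1}_A]$. *)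

theory Defs
  imports "HOL-Probability.Probability"
begin

text \<open>The distribution F_n is represented by a probability measure M on the Borel sets of
the reals; X is the identity random variable, so F_n(t) = measure M {..t}.\<close>

definition G :: "real measure \<Rightarrow> real \<Rightarrow> real" where
  "G M y = (LINT x:{..y}|M. x\<^sup>2 - y * x)"

end

theory Submission
  imports Defs
begin

theorem lemma8:
  fixes M :: "real measure" and \<mu> C K y_star :: real
  assumes "prob_space M"
    and "sets M = sets borel"
    and "integrable M (\<lambda>x. x\<^sup>2)"
    and "integrable M (\<lambda>x. x)"
    and "measure M {..0} > 0"
    and "\<mu> > 0"
    and "(LINT x|M. x) \<ge> \<mu>"
    and "(LINT x|M. x\<^sup>2) \<le> C"
    and "(LINT x:{..0}|M. x\<^sup>2) / measure M {..0} \<le> K"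
    and "y_star \<ge> 0"
    and "G M y_star = 0"
  shows "(LINT x:{..0}|M. x\<^sup>2) + y_star * (LINT x:{..0}|M. \<bar>x\<bar>)
           \<le> (K + (C / \<mu>) * sqrt K) * measure M {..0}"
proof -
  interpret prob_space M by (rule assms(1))
  have sp: "space M = UNIV" using sets_eq_imp_space_eq[OF assms(2)] by simp
  have s0: "{..0::real} \<in> sets M" using assms(2) by simp
  have sy: "{..y_star} \<in> sets M" using assms(2) by simp
  define A where "A = (LINT x:{..0}|M. x\<^sup>2)"
  define B where "B = (LINT x:{..0}|M. \<bar>x\<bar>)"
  define e where "e = measure M {..0}"
  have e0: "e > 0" using assms(5) e_def by simp
  have iX2: "integrable M (\<lambda>x. x\<^sup>2)" by (rule assms(3))
  have iX: "integrable M (\<lambda>x. x)" by (rule assms(4))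
  have iA: "integrable M (\<lambda>x. indicator {..0} x *\<^sub>R x\<^sup>2)"
    by (rule integrable_mult_indicator[OF s0 iX2])
  have iB: "integrable M (\<lambda>x. indicator {..0} x *\<^sub>R \<bar>x\<bar>)"
    by (rule integrable_mult_indicator[OF s0 integrable_abs[OF iX]])
  have iI: "integrable M (\<lambda>x. indicator {..0::real} x :: real)"
    using s0 by (intro integrable_real_indicator) (auto simp: less_top[symmetric])
  have iG: "integrable M (\<lambda>x. indicator {..y_star} x *\<^sub>R (x\<^sup>2 - y_star * x))"
    using iX iX2 by (intro integrable_mult_indicator[OF sy] integrable_diff) auto
  have Gdef: "(\<integral>x. indicator {..y_star} x *\<^sub>R (x\<^sup>2 - y_star * x) \<partial>M) = 0"
    using assms(11) unfolding G_def set_lebesgue_integral_def .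
  have eI: "e = (\<integral>x. indicator {..0::real} x \<partial>M)"
    unfolding e_def by (simp add: sp)
  have pt1: "y_star * x \<le> x\<^sup>2 - indicator {..y_star} x *\<^sub>R (x\<^sup>2 - y_star * x)" for x
  proof (cases "x \<le> y_star")
    case True then show ?thesis by simp
  next
    case False
    then have "y_star * x \<le> x * x" using assms(10) by (intro mult_right_mono) auto
    then show ?thesis using False by (simp add: power2_eq_square)
  qed
  have "(\<integral>x. y_star * x \<partial>M) \<le> (\<integral>x. x\<^sup>2 - indicator {..y_star} x *\<^sub>R (x\<^sup>2 - y_star * x) \<partial>M)"
    by (rule integral_mono) (use pt1 iX iX2 iG in auto)
  also have "\<dots> = (LINT x|M. x\<^sup>2)" using Gdef iX2 iG by simp
  finally have k1: "y_star * (LINT x|M. x) \<le> (LINT x|M. x\<^sup>2)" by simp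
  have "y_star * \<mu> \<le> y_star * (LINT x|M. x)"
    using assms(7,10) by (intro mult_left_mono) auto
  then have "y_star * \<mu> \<le> C" using k1 assms(8) by linarith
  then have ys: "y_star \<le> C / \<mu>" using assms(6) by (simp add: field_simps)
  define t where "t = B / e"
  have pt2: "indicator {..0} x *\<^sub>R (\<bar>x\<bar> - t)\<^sup>2 =
      indicator {..0} x *\<^sub>R x\<^sup>2 - 2 * t * (indicator {..0} x *\<^sub>R \<bar>x\<bar>) + t\<^sup>2 * indicator {..0::real} x" for x :: real
    by (simp add: power2_eq_square algebra_simps split: split_indicator)
  have "0 \<le> (\<integral>x. indicator {..0} x *\<^sub>R (\<bar>x\<bar> - t)\<^sup>2 \<partial>M)"
    by (rule integral_nonneg_AE) (auto split: split_indicator)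
  also have "\<dots> = A - 2 * t * B + t\<^sup>2 * e"
    unfolding pt2 using iA iB iI
    by (simp add: A_def B_def eI set_lebesgue_integral_def)
  finally have "0 \<le> A - 2 * t * B + t\<^sup>2 * e" .
  then have "0 \<le> A - B\<^sup>2 / e" using e0 unfolding t_def
    by (simp add: power2_eq_square field_simps)
  then have BA: "B\<^sup>2 \<le> A * e" using e0 by (simp add: field_simps)
  have A0: "A \<ge> 0" unfolding A_def set_lebesgue_integral_def
    by (rule integral_nonneg_AE) (auto split: split_indicator)
  have B0: "B \<ge> 0" unfolding B_def set_lebesgue_integral_def
    by (rule integral_nonneg_AE) (auto split: split_indicator)
  have AK: "A \<le> K * e" using assms(9) e0 unfolding A_def e_def by (simp add: field_simps)
  have K0: "K \<ge> 0" using AK A0 e0 by (meson le_less_trans linorder_not_le mult_neg_pos)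
  have "B\<^sup>2 \<le> K * e\<^sup>2" using BA AK e0
    by (smt (verit) mult_right_mono power2_eq_square mult.assoc)
  then have "sqrt (B\<^sup>2) \<le> sqrt (K * e\<^sup>2)" by (rule real_sqrt_le_mono)
  then have Bb: "B \<le> sqrt K * e" using B0 e0 by (simp add: real_sqrt_mult)
  have "y_star * B \<le> (C / \<mu>) * (sqrt K * e)"
    using ys Bb B0 assms(10) by (intro mult_mono) auto
  then have "A + y_star * B \<le> K * e + (C / \<mu>) * (sqrt K * e)" using AK by linarith
  then show ?thesis unfolding A_def B_def e_def by (simp add: algebra_simps)
qed

end
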